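(* Let $p\in(0,1)$. Let $Y_1,Y_2,\dots$ be i.i.d. with $Y_i=1-\mathrm{Geo}(p)$, and let $\hat Y_1,\hat Y_2,\dots$ be independent random variables where, via an independent fair coin flip for each $i$, $\hat Y_i=Y_i$ on heads and $\hat Y_i=0$ on tails. Then for every fixed $a\in(0,1)$, as $m\to\infty$, $$\Pr[\hat Y_1+\dots+\hat Y_m\ge am]\ge(2g_L(a)-o(1))^{-m}.$$
   Context: $\mathrm{Geo}(p)$ has $\Pr[\mathrm{Geo}(p)=k]=(1-p)^kp$, $k\ge0$. For $a\in[0,1]$, $\phi(a)$ denotes the unique $s\in[a,1]$ with $p(1-p)(2-s)^2(s-a)-a(1-s)=0$ (for $a\in(0,1)$ one has $0<a<\phi(a)<1$). $g_L:(0,1)\to\mathbb{R}$ is defined by $g_L(a)=1/2$ if $p>1/2$ and $0<a<1-\frac1{2p}$, and otherwise $g_L(a)=\frac{\phi(a)-a}{\phi(a)}\left(\frac{(1-p)(2-\phi(a))}{1-\phi(a)}\right)^a$. *)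

theory Defs
  imports "HOL-Probability.Probability"
begin

definition phi :: "real \<Rightarrow> real \<Rightarrow> real" where
  "phi p a = (THE s. a \<le> s \<and> s \<le> 1 \<and> p * (1 - p) * (2 - s)^2 * (s - a) - a * (1 - s) = 0)"

definition gL :: "real \<Rightarrow> real \<Rightarrow> real" where
  "gL p a = (if p > 1/2 \<and> 0 < a \<and> a < 1 - 1 / (2 * p) then 1/2
     else (phi p a - a) / phi p a * (((1 - p) * (2 - phi p a)) / (1 - phi p a)) powr a)"

definition Y_pmf :: "real \<Rightarrow> int pmf" where
  "Y_pmf p = map_pmf (\<lambda>k. 1 - int k) (geometric_pmf p)"

definition Yhat_pmf :: "real \<Rightarrow> int pmf" where
  "Yhat_pmf p = bind_pmf (bernoulli_pmf (1/2)) (\<lambda>heads. if heads then Y_pmf p else return_pmf 0)"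

fun Yhat_sum_pmf :: "real \<Rightarrow> nat \<Rightarrow> int pmf" where
  "Yhat_sum_pmf p 0 = return_pmf 0"
| "Yhat_sum_pmf p (Suc m) =
     bind_pmf (Yhat_sum_pmf p m) (\<lambda>s. map_pmf (\<lambda>y. s + y) (Yhat_pmf p))"

end

theory Submission
  imports Defs "HOL-Real_Asymp.Real_Asymp"
begin



lemma NB_Suc_alt:
  "neg_binomial_pmf (Suc h) p = bind_pmf (neg_binomial_pmf h p) (\<lambda>y. bind_pmf (geometric_pmf p) (\<lambda>x. return_pmf (x + y)))"
  unfolding neg_binomial_pmf_Suc pair_pmf_def
  by (subst bind_commute_pmf) (simp add: map_pmf_def bind_assoc_pmf bind_return_pmf)

lemma Yhat_step:
  "bind_pmf (neg_binomial_pmf h p) (\<lambda>n. map_pmf (\<lambda>y. (int h - int n) + y) (Yhat_pmf p)) =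
   bind_pmf (bernoulli_pmf (1/2)) (\<lambda>b. map_pmf (\<lambda>n. int (h + (if b then 1 else 0)) - int n)
       (neg_binomial_pmf (h + (if b then 1 else 0)) p))"
proof -
  have "bind_pmf (neg_binomial_pmf h p) (\<lambda>n. map_pmf (\<lambda>y. (int h - int n) + y) (Yhat_pmf p)) =
    bind_pmf (neg_binomial_pmf h p) (\<lambda>n. bind_pmf (bernoulli_pmf (1/2)) (\<lambda>b.
       if b then bind_pmf (geometric_pmf p) (\<lambda>k. return_pmf (int h - int n + (1 - int k)))
       else return_pmf (int h - int n)))"
    unfolding Yhat_pmf_def Y_pmf_def map_pmf_def
    by (simp add: bind_assoc_pmf bind_return_pmf) (intro bind_pmf_cong refl; simp add: bind_assoc_pmf bind_return_pmf)
  also have "\<dots> = bind_pmf (bernoulli_pmf (1/2)) (\<lambda>b. bind_pmf (neg_binomial_pmf h p) (\<lambda>n.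
       if b then bind_pmf (geometric_pmf p) (\<lambda>k. return_pmf (int h - int n + (1 - int k)))
       else return_pmf (int h - int n)))"
    by (rule bind_commute_pmf)
  also have "\<dots> = bind_pmf (bernoulli_pmf (1/2)) (\<lambda>b. map_pmf (\<lambda>n. int (h + (if b then 1 else 0)) - int n)
       (neg_binomial_pmf (h + (if b then 1 else 0)) p))"
  proof (rule bind_pmf_cong[OF refl])
    fix b :: bool
    show "bind_pmf (neg_binomial_pmf h p) (\<lambda>n.
       if b then bind_pmf (geometric_pmf p) (\<lambda>k. return_pmf (int h - int n + (1 - int k)))
       else return_pmf (int h - int n)) = map_pmf (\<lambda>n. int (h + (if b then 1 else 0)) - int n)
       (neg_binomial_pmf (h + (if b then 1 else 0)) p)"
    proof (cases b)
      case True
      then show ?thesis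
        by (simp add: NB_Suc_alt map_pmf_def bind_assoc_pmf bind_return_pmf algebra_simps)
    next
      case False
      then show ?thesis by (simp add: map_pmf_def)
    qed
  qed
  finally show ?thesis .
qed

lemma Yhat_sum_alt:
  assumes "0 < p" "p < 1"
  shows "Yhat_sum_pmf p m = bind_pmf (binomial_pmf m (1/2))
           (\<lambda>h. map_pmf (\<lambda>n. int h - int n) (neg_binomial_pmf h p))"
proof (induction m)
  case 0
  then show ?case by (simp add: binomial_pmf_0 bind_return_pmf)
next
  case (Suc m)
  have "Yhat_sum_pmf p (Suc m) = bind_pmf (binomial_pmf m (1/2)) (\<lambda>h.
     bind_pmf (neg_binomial_pmf h p) (\<lambda>n. map_pmf (\<lambda>y. (int h - int n) + y) (Yhat_pmf p)))"
    by (simp add: Suc bind_assoc_pmf bind_map_pmf)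
  also have "\<dots> = bind_pmf (binomial_pmf m (1/2)) (\<lambda>h.
     bind_pmf (bernoulli_pmf (1/2)) (\<lambda>b. map_pmf (\<lambda>n. int (h + (if b then 1 else 0)) - int n)
       (neg_binomial_pmf (h + (if b then 1 else 0)) p)))"
    by (simp add: Yhat_step)
  also have "\<dots> = bind_pmf (bernoulli_pmf (1/2)) (\<lambda>b. bind_pmf (binomial_pmf m (1/2)) (\<lambda>h.
       map_pmf (\<lambda>n. int (h + (if b then 1 else 0)) - int n)
       (neg_binomial_pmf (h + (if b then 1 else 0)) p)))"
    by (rule bind_commute_pmf)
  also have "\<dots> = bind_pmf (binomial_pmf (Suc m) (1/2))
           (\<lambda>h. map_pmf (\<lambda>n. int h - int n) (neg_binomial_pmf h p))"
    by (subst binomial_pmf_Suc) (auto simp: bind_assoc_pmf bind_return_pmf add.commute)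
  finally show ?case .
qed




lemma choose_step: "real (Suc j) * real (n choose Suc j) = real (n - j) * real (n choose j)"
proof -
  have "Suc j * (n choose Suc j) = (n - j) * (n choose j)"
    using binomial_absorption[of j n] binomial_absorb_comp[of n j] by simp
  then show ?thesis by (metis of_nat_mult)
qed

lemma ineq1: fixes j k n :: nat assumes "j < k" "k \<le> n"
  shows "Suc j * (n-k) \<le> (n-j)*k"
proof -
  have d: "int (n-k) = int n - int k" using assms by simp
  have e1: "int (Suc j*(n-k)) = (int j+1)*(int n - int k)" unfolding of_nat_mult d by simp
  have e2: "int ((n-j)*k) = (int n - int j)*int k" using assms by (simp add: of_nat_diff)
  have e3: "(int n - int j)*int k - (int j+1)*(int n - int k) = int k*(int n+1) - int n*(int j+1)"
    by (simp add: algebra_simps)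
  have "int n * (int j + 1) \<le> int n * int k" using assms by (intro mult_left_mono) auto
  also have "\<dots> \<le> int k * (int n + 1)" by (simp add: algebra_simps)
  finally have "int (Suc j*(n-k)) \<le> int ((n-j)*k)" using e1 e2 e3 by linarith
  then show ?thesis by (simp only: of_nat_le_iff)
qed
lemma ineq2: fixes j k n :: nat assumes "k \<le> j" "j < n"
  shows "(n-j)*k \<le> Suc j * (n-k)"
proof -
  have d: "int (n-k) = int n - int k" using assms by simp
  have e1: "int (Suc j*(n-k)) = (int j+1)*(int n - int k)" unfolding of_nat_mult d by simp
  have e2: "int ((n-j)*k) = (int n - int j)*int k" using assms by (simp add: of_nat_diff)
  have e3: "(int j+1)*(int n - int k) - (int n - int j)*int k = int n*(int j+1) - int k*(int n+1)"
    by (simp add: algebra_simps)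
  have "int k * (int n + 1) = int k * int n + int k" by (simp add: algebra_simps)
  also have "\<dots> \<le> int j * int n + int n" using assms by (intro add_mono mult_right_mono) auto
  also have "\<dots> = int n * (int j + 1)" by (simp add: algebra_simps)
  finally have "int ((n-j)*k) \<le> int (Suc j*(n-k))" using e1 e2 e3 by linarith
  then show ?thesis by (simp only: of_nat_le_iff)
qed

lemma binom_mode:
  fixes n k :: nat assumes kn: "k \<le> n"
  shows "real n ^ n \<le> real (n+1) * (real (n choose k) * real k ^ k * real (n-k)^(n-k))"
proof -
  define s where "s j = real (n choose j) * real k ^ j * real (n-k)^(n-j)" for j
  have step: "s (Suc j) * (real (Suc j) * real (n-k)) = s j * (real (n-j) * real k)" if "j < n" for j
  proof -
    have e: "real (n-k)^(n-j) = real (n-k)^(n - Suc j) * real (n-k)"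
      using that by (metis Suc_diff_Suc power_Suc2)
    define X where "X = real k ^ j * real (n-k)^(n - Suc j) * real k * real (n-k)"
    have "s (Suc j) * (real (Suc j) * real (n-k)) = (real (Suc j) * real (n choose Suc j)) * X"
      unfolding s_def X_def by (simp add: mult_ac)
    also have "\<dots> = (real (n - j) * real (n choose j)) * X" by (simp only: choose_step)
    also have "\<dots> = s j * (real (n-j) * real k)" unfolding s_def X_def e by (simp add: mult_ac)
    finally show ?thesis .
  qed
  have up: "s j \<le> s (Suc j)" if "j < k" for j
  proof (cases "k = n")
    case True
    then have "s j = 0" unfolding s_def using that by simp
    moreover have "s (Suc j) \<ge> 0" unfolding s_def by simp
    ultimately show ?thesis by simp
  next
    case False
    then have pos: "real (Suc j) * real (n-k) > 0" using kn by simp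
    have "real (Suc j) * real (n-k) \<le> real (n-j) * real k"
      using ineq1[OF that kn] by (metis of_nat_le_iff of_nat_mult)
    moreover have "s j \<ge> 0" unfolding s_def by simp
    ultimately have "s j * (real (Suc j) * real (n-k)) \<le> s j * (real (n-j) * real k)"
      by (rule mult_left_mono)
    also have "\<dots> = s (Suc j) * (real (Suc j) * real (n-k))" using step[of j] that kn by simp
    finally show ?thesis using pos by (rule mult_right_le_imp_le)
  qed
  have down: "s (Suc j) \<le> s j" if "k \<le> j" "j < n" for j
  proof -
    have kn': "k < n" using that by simp
    then have pos: "real (Suc j) * real (n-k) > 0" by simp
    have "real (n-j) * real k \<le> real (Suc j) * real (n-k)"
      using ineq2[OF that] by (metis of_nat_le_iff of_nat_mult)
    moreover have "s j \<ge> 0" unfolding s_def by simp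
    ultimately have "s j * (real (n-j) * real k) \<le> s j * (real (Suc j) * real (n-k))"
      by (rule mult_left_mono)
    then have "s (Suc j) * (real (Suc j) * real (n-k)) \<le> s j * (real (Suc j) * real (n-k))"
      using step[of j] that by simp
    then show ?thesis using pos by (rule mult_right_le_imp_le)
  qed
  have le1: "s j \<le> s k" if "j \<le> k" for j
    using that
  proof (induction "k - j" arbitrary: j)
    case 0 then show ?case by simp
  next
    case (Suc d)
    then have "s (Suc j) \<le> s k" by (intro Suc.hyps) auto
    moreover have "s j \<le> s (Suc j)" using Suc by (intro up) auto
    ultimately show ?case by simp
  qed
  have le2: "s j \<le> s k" if "k \<le> j" "j \<le> n" for j
    using that
  proof (induction j)
    case 0 then show ?case by simp
  next
    case (Suc j)
    show ?case
    proof (cases "k = Suc j")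
      case True then show ?thesis by simp
    next
      case False
      then have "s j \<le> s k" using Suc by auto
      moreover have "s (Suc j) \<le> s j" using Suc False by (intro down) auto
      ultimately show ?thesis by simp
    qed
  qed
  have "real n ^ n = (real k + real (n-k)) ^ n" using kn by simp
  also have "\<dots> = (\<Sum>j\<le>n. s j)" unfolding binomial_ring s_def by simp
  also have "\<dots> \<le> (\<Sum>j\<le>n. s k)"
    by (intro sum_mono) (metis le1 le2 atMost_iff nat_le_linear)
  also have "\<dots> = real (n+1) * s k" by simp
  finally show ?thesis unfolding s_def by simp
qed




definition Ent :: "nat \<Rightarrow> nat \<Rightarrow> real" where
  "Ent n k = real n * ln (real n) - real k * ln (real k) - real (n-k) * ln (real (n-k))"

lemma exp_nat_ln: "exp (real c * ln (real c)) = real c ^ c"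
proof (cases "c = 0")
  case True then show ?thesis by simp
next
  case False
  then show ?thesis by (simp add: exp_of_nat_mult)
qed

lemma binom_lower:
  assumes "k \<le> n"
  shows "exp (Ent n k) / real (n+1) \<le> real (n choose k)"
proof -
  have pos: "real k ^ k * real (n-k)^(n-k) > 0"
    by (intro mult_pos_pos) (cases "k = 0"; cases "n - k = 0"; simp)+
  have "exp (Ent n k) = real n ^ n / (real k ^ k * real (n-k)^(n-k))"
    unfolding Ent_def by (simp add: exp_diff exp_nat_ln)
  also have "\<dots> \<le> real (n+1) * real (n choose k)"
    using binom_mode[OF assms] pos by (simp add: divide_le_eq mult_ac)
  finally show ?thesis by (simp add: divide_le_eq mult_ac)
qed

lemma prob_lower:
  assumes p: "0 < p" "p < 1" and hm: "h \<le> m" and x: "a * real m \<le> real h - real n"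
  shows "measure_pmf.prob (Yhat_sum_pmf p m) {x. real_of_int x \<ge> a * real m}
         \<ge> pmf (binomial_pmf m (1/2)) h * pmf (neg_binomial_pmf h p) n"
proof -
  let ?G = "\<lambda>h. map_pmf (\<lambda>n. int h - int n) (neg_binomial_pmf h p)"
  have "pmf (binomial_pmf m (1/2)) h * pmf (neg_binomial_pmf h p) n =
        pmf (?G h) (int h - int n) * pmf (binomial_pmf m (1/2)) h"
    by (subst pmf_map_inj') (auto simp: inj_on_def)
  also have "\<dots> \<le> (\<Sum>h'\<in>{..m}. pmf (?G h') (int h - int n) * pmf (binomial_pmf m (1/2)) h')"
    by (rule member_le_sum) (use hm in auto)
  also have "\<dots> = pmf (Yhat_sum_pmf p m) (int h - int n)"
    unfolding Yhat_sum_alt[OF p] pmf_bind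
    by (subst integral_measure_pmf_real[where A="{..m}"]) auto
  also have "\<dots> = measure_pmf.prob (Yhat_sum_pmf p m) {int h - int n}"
    by (simp add: measure_pmf_single)
  also have "\<dots> \<le> measure_pmf.prob (Yhat_sum_pmf p m) {x. real_of_int x \<ge> a * real m}"
    by (rule measure_pmf.finite_measure_mono) (use x in auto)
  finally show ?thesis .
qed




definition glog :: "real \<Rightarrow> real" where "glog t = t * ln t"

lemma glog_scale: assumes "m > 0" "x \<ge> 0" shows "glog (x / m) = x * ln x / m - x / m * ln m"
proof (cases "x = 0")
  case True then show ?thesis by (simp add: glog_def)
next
  case False
  then have "x > 0" using assms by simp
  then show ?thesis using assms by (simp add: glog_def ln_div field_simps)
qed

lemma Ent_scale:
  assumes "m > 0" "k \<le> n"
  shows "Ent n k / m = glog (real n / m) - glog (real k / m) - glog (real (n-k) / m)"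
proof -
  have r: "real (n - k) = real n - real k" using assms by simp
  show ?thesis unfolding Ent_def
    using assms by (simp add: glog_scale r field_simps)
qed

lemma isCont_glog: "x > 0 \<Longrightarrow> isCont glog x"
  unfolding glog_def by (intro continuous_intros) auto

lemma lim_div:
  fixes x :: "nat \<Rightarrow> real"
  assumes "\<And>m. \<bar>x m - c * real m\<bar> \<le> 1"
  shows "(\<lambda>m. x m / real m) \<longlonglongrightarrow> c"
proof (rule tendsto_sandwich[of "\<lambda>m. c - 1 / real m" _ _ "\<lambda>m. c + 1 / real m"])
  show "\<forall>\<^sub>F m in sequentially. c - 1 / real m \<le> x m / real m"
    using eventually_gt_at_top[of 0]
  proof eventually_elim
    case (elim m)
    then have "x m \<ge> c * real m - 1" using assms[of m] by linarith
    then have "(c * real m - 1) / real m \<le> x m / real m" by (rule divide_right_mono) simp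
    moreover have "(c * real m - 1) / real m = c - 1 / real m" using elim by (simp add: field_simps)
    ultimately show ?case by simp
  qed
  show "\<forall>\<^sub>F m in sequentially. x m / real m \<le> c + 1 / real m"
    using eventually_gt_at_top[of 0]
  proof eventually_elim
    case (elim m)
    then have "x m \<le> c * real m + 1" using assms[of m] by linarith
    then have "x m / real m \<le> (c * real m + 1) / real m" by (rule divide_right_mono) simp
    moreover have "(c * real m + 1) / real m = c + 1 / real m" using elim by (simp add: field_simps)
    ultimately show ?case by simp
  qed
  show "(\<lambda>m. c - 1 / real m) \<longlonglongrightarrow> c" by real_asymp
  show "(\<lambda>m. c + 1 / real m) \<longlonglongrightarrow> c" by real_asymp
qed

lemma pow_lim: "(\<lambda>m::nat. real ((m+1)*(2*m+1)) powr (1 / real m)) \<longlonglongrightarrow> 1"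
proof -
  have "(\<lambda>m::nat. ((real m + 1)*(2*real m+1)) powr (1 / real m)) \<longlonglongrightarrow> 1" by real_asymp
  then show ?thesis by (simp add: algebra_simps)
qed




definition Fr :: "real \<Rightarrow> real \<Rightarrow> real \<Rightarrow> real" where
  "Fr p b c = - glog b - glog (1-b) + glog (b+c) - glog c - glog b - ln 2 + b * ln p + c * ln (1-p)"

lemma core:
  assumes p: "0 < p" "p < 1" and b: "0 < b" "b < 1" and c: "0 < c" "c \<le> b - a" and a: "0 < a"
  shows "\<exists>X. X \<longlonglongrightarrow> exp (- Fr p b c) \<and>
    (\<forall>\<^sub>F m in sequentially.
       measure_pmf.prob (Yhat_sum_pmf p m) {x. real_of_int x \<ge> a * real m} \<ge> inverse (X m ^ m))"
proof -
  define h where "h m = nat \<lceil>b * real m\<rceil>" for m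
  define n where "n m = nat \<lfloor>c * real m\<rfloor>" for m
  define N where "N m = n m + h m - 1" for m
  define R where "R m = (Ent m (h m) + Ent (N m) (n m)) / real m - ln 2
     + real (h m) / real m * ln p + real (n m) / real m * ln (1-p)" for m
  define X where "X m = real ((m+1)*(2*m+1)) powr (1 / real m) * exp (- R m)" for m
  have hr: "real (h m) \<ge> b * real m" "real (h m) \<le> b * real m + 1" for m
    unfolding h_def using b by (auto intro!: order.trans[OF _ of_int_ceiling_le_add_one] simp: )
  have nr: "real (n m) \<le> c * real m" "real (n m) \<ge> c * real m - 1" for m
    unfolding n_def using c by auto
  have hm: "h m \<le> m" for m
  proof -
    have "b * real m \<le> real m" using b by (intro mult_left_le_one_le) auto
    then show ?thesis unfolding h_def by (simp add: ceiling_le_iff nat_le_iff)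
  qed
  have h1: "h m \<ge> 1" if "m > 0" for m
  proof -
    have "b * real m > 0" using b that by simp
    then show ?thesis unfolding h_def by linarith
  qed
  have nm: "n m \<le> m" for m
  proof -
    have "real (n m) \<le> real m" proof -
      have "c * real m \<le> real m" using a b c by (intro mult_left_le_one_le) auto
      then show ?thesis using nr(1)[of m] by linarith
    qed
    then show ?thesis by simp
  qed
  have ineq: "a * real m \<le> real (h m) - real (n m)" for m
  proof -
    have "c * real m \<le> (b - a) * real m" using c by (intro mult_right_mono) auto
    then show ?thesis using hr(1)[of m] nr(1)[of m] by (simp add: algebra_simps)
  qed
  have Nr: "real (N m) = real (n m) + real (h m) - 1" if "m > 0" for m
    using h1[OF that] unfolding N_def by simp
  have bound: "measure_pmf.prob (Yhat_sum_pmf p m) {x. real_of_int x \<ge> a * real m} \<ge> inverse (X m ^ m)"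
    if m: "m > 0" for m
  proof -
    define Q where "Q = real ((m+1)*(2*m+1))"
    have Qpos: "Q > 0" unfolding Q_def by (simp only: of_nat_0_less_iff) simp
    have expk: "exp (real k * ln y) = y ^ k" if "y > 0" for k y
      using that by (simp add: exp_of_nat_mult)
    have mR: "real m * R m = Ent m (h m) + Ent (N m) (n m) + real m * ln (1/2)
        + real (h m) * ln p + real (n m) * ln (1-p)"
      unfolding R_def using m by (simp add: field_simps ln_div)
    have eR: "exp (real m * R m) = exp (Ent m (h m)) * exp (Ent (N m) (n m)) * (1/2)^m * p ^ h m * (1-p) ^ n m"
      unfolding mR exp_add using p by (simp add: expk)
    have Xm: "X m ^ m = Q * exp (- (real m * R m))"
    proof -
      have "X m ^ m = (Q powr (1 / real m)) ^ m * exp (- R m) ^ m" unfolding X_def Q_def by (simp add: power_mult_distrib)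
      also have "(Q powr (1 / real m)) ^ m = Q" using Qpos m by (subst powr_power) auto
      also have "exp (- R m) ^ m = exp (- (real m * R m))" by (subst exp_of_nat_mult[symmetric]) simp
      finally show ?thesis .
    qed
    have invX: "inverse (X m ^ m) = exp (real m * R m) / Q"
      unfolding Xm by (simp add: exp_minus field_simps)
    have NB: "N m + 1 \<le> 2 * m + 1" using hm[of m] nm[of m] unfolding N_def by simp
    have C1: "exp (Ent m (h m)) / real (m+1) \<le> real (m choose h m)" by (rule binom_lower[OF hm])
    have C2: "exp (Ent (N m) (n m)) / real (2*m+1) \<le> real (N m choose n m)"
    proof -
      have "exp (Ent (N m) (n m)) / real (2*m+1) \<le> exp (Ent (N m) (n m)) / real (N m + 1)"
        using NB by (intro divide_left_mono) auto
      also have "\<dots> \<le> real (N m choose n m)" by (rule binom_lower) (use h1[OF m] in \<open>simp add: N_def\<close>)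
      finally show ?thesis .
    qed
    have pB: "pmf (binomial_pmf m (1/2)) (h m) = real (m choose h m) * (1/2)^m"
      using hm[of m] by (simp add: power_add[symmetric])
    have pN: "pmf (neg_binomial_pmf (h m) p) (n m) = real (N m choose n m) * p ^ h m * (1-p) ^ n m"
      using p by (subst pmf_neg_binomial) (auto simp: N_def add.commute)
    have "inverse (X m ^ m) = (exp (Ent m (h m)) / real (m+1)) * (exp (Ent (N m) (n m)) / real (2*m+1))
          * ((1/2)^m * p ^ h m * (1-p) ^ n m)"
      unfolding invX eR Q_def by (simp add: field_simps)
    also have "\<dots> \<le> real (m choose h m) * real (N m choose n m) * ((1/2)^m * p ^ h m * (1-p) ^ n m)"
      using p by (intro mult_right_mono mult_mono C1 C2) auto
    also have "\<dots> = pmf (binomial_pmf m (1/2)) (h m) * pmf (neg_binomial_pmf (h m) p) (n m)"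
      unfolding pB pN by (simp add: mult_ac)
    also have "\<dots> \<le> measure_pmf.prob (Yhat_sum_pmf p m) {x. real_of_int x \<ge> a * real m}"
      by (rule prob_lower[OF p hm ineq])
    finally show ?thesis .
  qed
  have Lh: "(\<lambda>m. real (h m) / real m) \<longlonglongrightarrow> b"
    by (rule lim_div) (use hr in \<open>smt (verit)\<close>)
  have Ln: "(\<lambda>m. real (n m) / real m) \<longlonglongrightarrow> c"
    by (rule lim_div) (use nr in \<open>smt (verit)\<close>)
  have L1: "(\<lambda>m. 1 / real m) \<longlonglongrightarrow> 0" by real_asymp
  have Lmh: "(\<lambda>m. real (m - h m) / real m) \<longlonglongrightarrow> 1 - b"
  proof (rule Lim_transform_eventually)
    show "(\<lambda>m. 1 - real (h m) / real m) \<longlonglongrightarrow> 1 - b" by (intro tendsto_intros Lh)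
    show "\<forall>\<^sub>F m in sequentially. 1 - real (h m) / real m = real (m - h m) / real m"
      using eventually_gt_at_top[of 0] by eventually_elim (use hm in \<open>simp add: of_nat_diff field_simps\<close>)
  qed
  have LN: "(\<lambda>m. real (N m) / real m) \<longlonglongrightarrow> b + c"
  proof (rule Lim_transform_eventually)
    show "(\<lambda>m. real (h m) / real m + real (n m) / real m - 1 / real m) \<longlonglongrightarrow> b + c"
      using tendsto_diff[OF tendsto_add[OF Lh Ln] L1] by simp
    show "\<forall>\<^sub>F m in sequentially. real (h m) / real m + real (n m) / real m - 1 / real m = real (N m) / real m"
      using eventually_gt_at_top[of 0] by eventually_elim (simp add: Nr field_simps)
  qed
  have LNn: "(\<lambda>m. real (N m - n m) / real m) \<longlonglongrightarrow> b"
  proof (rule Lim_transform_eventually)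
    show "(\<lambda>m. real (h m) / real m - 1 / real m) \<longlonglongrightarrow> b"
      using tendsto_diff[OF Lh L1] by simp
    show "\<forall>\<^sub>F m in sequentially. real (h m) / real m - 1 / real m = real (N m - n m) / real m"
      using eventually_gt_at_top[of 0] by eventually_elim (use h1 in \<open>simp add: N_def of_nat_diff field_simps\<close>)
  qed
  have LR: "R \<longlonglongrightarrow> Fr p b c"
  proof (rule Lim_transform_eventually)
    have T: "(\<lambda>m. glog 1 - glog (real (h m) / real m) - glog (real (m - h m) / real m)
        + (glog (real (N m) / real m) - glog (real (n m) / real m) - glog (real (N m - n m) / real m))
        - ln 2 + real (h m) / real m * ln p + real (n m) / real m * ln (1-p)) \<longlonglongrightarrow>
        glog 1 - glog b - glog (1-b) + (glog (b+c) - glog c - glog b) - ln 2 + b * ln p + c * ln (1-p)"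
      by (intro tendsto_intros Lh Ln isCont_tendsto_compose[OF isCont_glog] Lmh LN LNn)
         (use b c in auto)
    have e: "glog 1 - glog b - glog (1-b) + (glog (b+c) - glog c - glog b) - ln 2 + b * ln p + c * ln (1-p)
       = Fr p b c" unfolding Fr_def by (simp add: glog_def)
    show "(\<lambda>m. glog 1 - glog (real (h m) / real m) - glog (real (m - h m) / real m)
        + (glog (real (N m) / real m) - glog (real (n m) / real m) - glog (real (N m - n m) / real m))
        - ln 2 + real (h m) / real m * ln p + real (n m) / real m * ln (1-p)) \<longlonglongrightarrow> Fr p b c"
      using T unfolding e .
    show "\<forall>\<^sub>F m in sequentially. glog 1 - glog (real (h m) / real m) - glog (real (m - h m) / real m)
        + (glog (real (N m) / real m) - glog (real (n m) / real m) - glog (real (N m - n m) / real m))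
        - ln 2 + real (h m) / real m * ln p + real (n m) / real m * ln (1-p) = R m"
      using eventually_gt_at_top[of 0]
    proof eventually_elim
      case (elim m)
      have "Ent m (h m) / real m = glog 1 - glog (real (h m) / real m) - glog (real (m - h m) / real m)"
        using Ent_scale[of "real m" "h m" m] elim hm by simp
      moreover have "Ent (N m) (n m) / real m = glog (real (N m) / real m) - glog (real (n m) / real m) - glog (real (N m - n m) / real m)"
        using Ent_scale[of "real m" "n m" "N m"] elim h1[of m] unfolding N_def by simp
      ultimately show ?case unfolding R_def by (simp add: add_divide_distrib)
    qed
  qed
  have LX: "X \<longlonglongrightarrow> exp (- Fr p b c)"
    unfolding X_def using tendsto_mult[OF pow_lim tendsto_exp[OF tendsto_minus[OF LR]]] by simp
  show ?thesis
    by (intro exI[of _ X] conjI LX eventually_mono[OF eventually_gt_at_top[of 0]] bound)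
qed




lemma cross_ineq:
  fixes s t :: real assumes "0 \<le> s" "s < t" "t < 1"
  shows "(1-t)*(2-s)^2 \<le> (1-s)*(2-t)^2"
proof -
  define u where "u = 1 - s"
  define v where "v = 1 - t"
  have uv: "v < u" "0 < v" "u \<le> 1" using assms unfolding u_def v_def by auto
  have "(1-s)*(2-t)^2 - (1-t)*(2-s)^2 = (u - v) * (1 - u * v)"
    unfolding u_def v_def by (simp add: power2_eq_square algebra_simps)
  moreover have "u * v \<le> 1" using uv by (intro mult_le_one) auto
  ultimately show ?thesis using uv by (smt (verit) mult_nonneg_nonneg)
qed

definition cub :: "real \<Rightarrow> real \<Rightarrow> real \<Rightarrow> real" where
  "cub p a s = p * (1 - p) * (2 - s)^2 * (s - a) - a * (1 - s)"

lemma phi_props: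
  assumes p: "0 < p" "p < 1" and a: "0 < a" "a < 1"
  shows "a < phi p a" "phi p a < 1" "p * (1 - p) * (2 - phi p a)^2 * (phi p a - a) = a * (1 - phi p a)"
proof -
  define K where "K = p * (1 - p)"
  have K: "K > 0" unfolding K_def using p by simp
  have ex: "\<exists>s. a \<le> s \<and> s \<le> 1 \<and> cub p a s = 0"
  proof (rule IVT')
    show "cub p a a \<le> 0" unfolding cub_def using a by (simp add: mult_nonneg_nonneg)
    show "0 \<le> cub p a 1" unfolding cub_def using a p by simp
    show "a \<le> 1" using a by simp
    show "continuous_on {a..1} (cub p a)" unfolding cub_def by (intro continuous_intros)
  qed
  have inner: "a < s \<and> s < 1" if "a \<le> s" "s \<le> 1" "cub p a s = 0" for s
  proof -
    have "s \<noteq> a" using that a unfolding cub_def by auto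
    moreover have "s \<noteq> 1" using that a p unfolding cub_def by auto
    ultimately show ?thesis using that by auto
  qed
  have uniq: "s = t" if "a \<le> s" "s \<le> 1" "cub p a s = 0" "a \<le> t" "t \<le> 1" "cub p a t = 0" for s t
  proof (rule ccontr)
    assume "s \<noteq> t"
    have main: False if st: "s < t" and hs: "a < s" "s < 1" "cub p a s = 0" and ht: "a < t" "t < 1" "cub p a t = 0" for s t
    proof -
      have es: "K * (2-s)^2 * (s-a) = a * (1-s)" using hs unfolding cub_def K_def by simp
      have et: "K * (2-t)^2 * (t-a) = a * (1-t)" using ht unfolding cub_def K_def by simp
      have "K * ((2-s)^2 * (s-a) * (1-t)) = K * ((2-t)^2 * (t-a) * (1-s))"
      proof -
        have "K * ((2-s)^2 * (s-a) * (1-t)) = (K * (2-s)^2 * (s-a)) * (1-t)" by (simp add: mult_ac)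
        also have "\<dots> = a * (1-s) * (1-t)" by (simp only: es)
        also have "\<dots> = (a * (1-t)) * (1-s)" by (simp add: mult_ac)
        also have "\<dots> = (K * (2-t)^2 * (t-a)) * (1-s)" by (simp only: et)
        finally show ?thesis by (simp add: mult_ac)
      qed
      then have eq: "(1-t) * (2-s)^2 * (s-a) = (1-s) * (2-t)^2 * (t-a)" using K by (simp add: mult_ac)
      have "(1-t) * (2-s)^2 * (s-a) < (1-t) * (2-s)^2 * (t-a)"
        using st hs ht by (intro mult_strict_left_mono) auto
      also have "\<dots> \<le> (1-s) * (2-t)^2 * (t-a)"
        using cross_ineq[of s t] st hs ht a by (intro mult_right_mono) auto
      finally show False using eq by simp
    qed
    show False
    proof (cases "s < t")
      case True then show ?thesis using main[of s t] inner that by blast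
    next
      case False then have "t < s" using \<open>s \<noteq> t\<close> by simp
      then show ?thesis using main[of t s] inner that by blast
    qed
  qed
  have th: "a \<le> phi p a \<and> phi p a \<le> 1 \<and> cub p a (phi p a) = 0"
    unfolding phi_def cub_def[symmetric]
    by (rule theI') (use ex uniq in blast)
  then show "a < phi p a" "phi p a < 1" using inner by auto
  show "p * (1 - p) * (2 - phi p a)^2 * (phi p a - a) = a * (1 - phi p a)"
    using th unfolding cub_def by simp
qed




lemma Fr_special:
  assumes "0 < p" "p < 1"
  shows "Fr p (1/2) ((1-p)/(2*p)) = 0"
proof -
  have e1: "1 - 1/2 = (1/2::real)" by simp
  have e2: "1/2 + (1-p)/(2*p) = 1/(2*p)" using assms by (simp add: field_simps)
  have g1: "glog (1/2) = -(1/2) * ln 2" unfolding glog_def by (simp add: ln_div)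
  have g2: "glog (1/(2*p)) = (1/(2*p)) * (- ln 2 - ln p)" unfolding glog_def using assms
    by (simp add: ln_div ln_mult)
  have g3: "glog ((1-p)/(2*p)) = ((1-p)/(2*p)) * (ln (1-p) - ln 2 - ln p)" unfolding glog_def using assms
    by (simp add: ln_div ln_mult)
  show ?thesis unfolding Fr_def e1 e2 g1 g2 g3 using assms
    by (simp add: field_simps)
qed

lemma Fr_gen:
  assumes p: "0 < p" "p < 1" and s: "0 < a" "a < s" "s < 1"
    and cub: "p * (1 - p) * (2 - s)^2 * (s - a) = a * (1 - s)"
  shows "- Fr p (a/s) (a*(1-s)/s) = ln 2 + ln ((s-a)/s) + a * ln ((1-p)*(2-s)/(1-s))"
proof -
  define la ls lsa l2s l1s lp lq where "la = ln a" "ls = ln s" "lsa = ln (s-a)" "l2s = ln (2-s)"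
    "l1s = ln (1-s)" "lp = ln p" "lq = ln (1-p)"
  have key: "lp + lq + 2 * l2s + lsa = la + l1s"
  proof -
    have "ln (p * (1 - p) * (2 - s)^2 * (s - a)) = ln (a * (1 - s))" using cub by simp
    then show ?thesis using p s unfolding la_ls_lsa_l2s_l1s_lp_lq_def
      by (simp add: ln_mult ln_realpow)
  qed
  have e1: "1 - a/s = (s-a)/s" "a/s + a*(1-s)/s = a*(2-s)/s" using s by (auto simp: field_simps)
  have g1: "glog (a/s) = a/s * (la - ls)" unfolding glog_def la_ls_lsa_l2s_l1s_lp_lq_def using s by (simp add: ln_div)
  have g2: "glog ((s-a)/s) = (s-a)/s * (lsa - ls)" unfolding glog_def la_ls_lsa_l2s_l1s_lp_lq_def using s by (simp add: ln_div)
  have g3: "glog (a*(2-s)/s) = a*(2-s)/s * (la + l2s - ls)" unfolding glog_def la_ls_lsa_l2s_l1s_lp_lq_def using s by (simp add: ln_div ln_mult)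
  have g4: "glog (a*(1-s)/s) = a*(1-s)/s * (la + l1s - ls)" unfolding glog_def la_ls_lsa_l2s_l1s_lp_lq_def using s by (simp add: ln_div ln_mult)
  have r: "ln 2 + ln ((s-a)/s) + a * ln ((1-p)*(2-s)/(1-s)) = ln 2 + lsa - ls + a * (lq + l2s - l1s)"
    unfolding la_ls_lsa_l2s_l1s_lp_lq_def using p s by (simp add: ln_div ln_mult)
  have lpe: "lp = la + l1s - lq - 2 * l2s - lsa" using key by simp
  show ?thesis unfolding Fr_def e1 g1 g2 g3 g4 r la_ls_lsa_l2s_l1s_lp_lq_def(6)[symmetric]
    la_ls_lsa_l2s_l1s_lp_lq_def(7)[symmetric] lpe using s
    by (simp add: field_simps)
qed




theorem lemma15:
  fixes p a :: real
  assumes "0 < p" "p < 1" "0 < a" "a < 1"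
  shows "\<exists>\<epsilon> :: nat \<Rightarrow> real. \<epsilon> \<longlonglongrightarrow> 0 \<and>
    (\<forall>\<^sub>F m in sequentially.
       measure_pmf.prob (Yhat_sum_pmf p m) {x. real_of_int x \<ge> a * real m}
         \<ge> inverse ((2 * gL p a - \<epsilon> m) ^ m))"
proof -
  have "\<exists>X. X \<longlonglongrightarrow> 2 * gL p a \<and>
    (\<forall>\<^sub>F m in sequentially.
       measure_pmf.prob (Yhat_sum_pmf p m) {x. real_of_int x \<ge> a * real m} \<ge> inverse (X m ^ m))"
  proof (cases "p > 1/2 \<and> 0 < a \<and> a < 1 - 1 / (2 * p)")
    case True
    have g: "2 * gL p a = 1" unfolding gL_def using True by simp
    have c: "0 < (1-p)/(2*p)" "(1-p)/(2*p) \<le> 1/2 - a"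
      using assms True by (auto simp: field_simps)
    obtain X where "X \<longlonglongrightarrow> exp (- Fr p (1/2) ((1-p)/(2*p)))"
      "\<forall>\<^sub>F m in sequentially. measure_pmf.prob (Yhat_sum_pmf p m) {x. real_of_int x \<ge> a * real m} \<ge> inverse (X m ^ m)"
      using core[of p "1/2" "(1-p)/(2*p)" a] assms c by auto
    then show ?thesis unfolding g Fr_special[OF assms(1,2)] by auto
  next
    case False
    define s where "s = phi p a"
    have s: "a < s" "s < 1" "p * (1 - p) * (2 - s)^2 * (s - a) = a * (1 - s)"
      using phi_props[OF assms] unfolding s_def by auto
    have Qv: "(1-p)*(2-s)/(1-s) > 0" using s assms by simp
    have gl: "gL p a = (s - a) / s * (((1-p)*(2-s)/(1-s)) powr a)"
      unfolding gL_def if_not_P[OF False] s_def by simp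
    have "exp (- Fr p (a/s) (a*(1-s)/s)) = exp (ln 2) * exp (ln ((s-a)/s)) * exp (a * ln ((1-p)*(2-s)/(1-s)))"
      unfolding Fr_gen[OF assms(1,2,3) s] by (simp only: exp_add)
    also have "\<dots> = 2 * ((s-a)/s) * (((1-p)*(2-s)/(1-s)) powr a)"
      using s assms Qv by (simp add: powr_def)
    finally have g: "2 * gL p a = exp (- Fr p (a/s) (a*(1-s)/s))" unfolding gl by simp
    have c: "0 < a/s" "a/s < 1" "0 < a*(1-s)/s" "a*(1-s)/s \<le> a/s - a"
      using assms s by (auto simp: field_simps)
    show ?thesis unfolding g using core[of p "a/s" "a*(1-s)/s" a] assms c by auto
  qed
  then obtain X where X: "X \<longlonglongrightarrow> 2 * gL p a"
    "\<forall>\<^sub>F m in sequentially. measure_pmf.prob (Yhat_sum_pmf p m) {x. real_of_int x \<ge> a * real m} \<ge> inverse (X m ^ m)"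
    by blast
  show ?thesis
  proof (intro exI[of _ "\<lambda>m. 2 * gL p a - X m"] conjI)
    show "(\<lambda>m. 2 * gL p a - X m) \<longlonglongrightarrow> 0"
      using tendsto_diff[OF tendsto_const X(1), of "2 * gL p a"] by simp
    show "\<forall>\<^sub>F m in sequentially. measure_pmf.prob (Yhat_sum_pmf p m) {x. real_of_int x \<ge> a * real m}
         \<ge> inverse ((2 * gL p a - (2 * gL p a - X m)) ^ m)"
      using X(2) by simp
  qed
qed


end
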